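(* Fix $\delta\in(0,1)$. Suppose that for each $t\ge2$ and $g\in[t-1]$, $T^{(t)}_g\in\{0,1\}$ is a measurable function of $(Y_1,\dots,Y_t)$, and that: (A) for all $t\ge 2$ and $g\in[t-1]$, $\mathbb P_\infty(T^{(t)}_g=1)\le \delta/(3t^2\log t)$; (B) there are a number $\rho=\rho(P_1,P_2)\ge0$ and a function $r(t,\delta)>0$ non-decreasing in $t$ such that whenever $\tau<\infty$, $\tau<t\le 2\tau$ and $(t-\tau)\rho\ge r(t,\delta)$, we have $\mathbb P_\tau(T^{(t)}_g=1)\ge1-\delta$ for every integer $g$ with $(t-\tau)/2\le g\le t-\tau$. Let $\hat\tau=\inf\{t\in\mathbb N:t\ge2,\ \max_{g\in G^{(t)}}T^{(t)}_g=1\}$. Then $\mathbb P_\infty(\hat\tau<\infty)\le\delta$, and for every $\tau\in\mathbb N$ with $\tau\rho\ge r(2\tau,\delta)$, $$\mathbb P_\tau\Big\{\hat\tau\le\tau+\Big\lceil\frac{r(2\tau,\delta)}{\rho}\Big\rceil\Big\}\ge1-\delta.$$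
   Context: $\log$ is the natural logarithm, $[n]=\{1,\dots,n\}$, $\inf\emptyset=\infty$. Model: $(Y_i)_{i\in\mathbb N}$ are independent random vectors in $\mathbb R^p$; for $\tau\in\mathbb N\cup\{\infty\}$, under $\mathbb P_\tau$, $Y_i\sim P_1$ for $i\le\tau$ and $Y_i\sim P_2$ for $i>\tau$ (all $Y_i\sim P_1$ if $\tau=\infty$). Dynamic geometric grid: for $t\ge2$, $G^{(t)}=\{1\}\cup\bigcup_{j=1}^{\lfloor \log_2\{(t-1)/3\}\rfloor+1}\{g^{(t)}_{L,j}\}\cup\bigcup_{j=1}^{\lfloor\log_2(t-1)\rfloor-1}\{g^{(t)}_{R,j}\}$ with $g^{(t)}_{L,j}=2^j+\{(t-1)\bmod 2^{j-1}\}$, $g^{(t)}_{R,j}=g^{(t)}_{L,j}+2^{j-1}$ (empty unions if the upper index is $<1$; $a\bmod b=a-b\lfloor a/b\rfloor$). *)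

theory Defs
  imports "HOL-Probability.Probability"
begin

text \<open>Law of the whole data sequence under the change point tau (index 0 is a dummy
  coordinate with law P1; the data are coordinates 1,2,...). tau = infinity means no change.\<close>
definition Ptau :: "'a measure \<Rightarrow> 'a measure \<Rightarrow> enat \<Rightarrow> (nat \<Rightarrow> 'a) measure" where
  "Ptau P1 P2 \<tau> = (\<Pi>\<^sub>M i\<in>UNIV. (if enat i \<le> \<tau> then P1 else P2))"

definition gL :: "nat \<Rightarrow> nat \<Rightarrow> nat" where
  "gL t j = 2 ^ j + ((t - 1) mod 2 ^ (j - 1))"

definition gR :: "nat \<Rightarrow> nat \<Rightarrow> nat" where
  "gR t j = gL t j + 2 ^ (j - 1)"

definition grid :: "nat \<Rightarrow> nat set" where
  "grid t = {1}
     \<union> {gL t j | j. 1 \<le> j \<and> int j \<le> \<lfloor>log 2 ((real t - 1) / 3)\<rfloor> + 1}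
     \<union> {gR t j | j. 1 \<le> j \<and> int j \<le> \<lfloor>log 2 (real t - 1)\<rfloor> - 1}"

definition tauhat :: "(nat \<Rightarrow> nat \<Rightarrow> 'w \<Rightarrow> bool) \<Rightarrow> 'w \<Rightarrow> enat" where
  "tauhat T \<omega> = (if \<exists>t\<ge>2. \<exists>g\<in>grid t. T t g \<omega>
     then enat (LEAST t. 2 \<le> t \<and> (\<exists>g\<in>grid t. T t g \<omega>)) else \<infinity>)"

end

theory Submission imports Defs "HOL-Analysis.Harmonic_Numbers"
begin

lemma floor_log_le_iff:
  fixes x :: real assumes "0 < x"
  shows "int j \<le> \<lfloor>log 2 x\<rfloor> \<longleftrightarrow> 2 ^ j \<le> x"
proof -
  have "int j \<le> \<lfloor>log 2 x\<rfloor> \<longleftrightarrow> real j \<le> log 2 x"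
    by (metis floor_of_nat le_floor_iff of_int_of_nat_eq)
  also have "\<dots> \<longleftrightarrow> 2 powr real j \<le> x" using assms by (simp add: le_log_iff)
  also have "\<dots> \<longleftrightarrow> 2 ^ j \<le> x" by (simp add: powr_realpow)
  finally show ?thesis .
qed

lemma grid_eq:
  assumes "2 \<le> t"
  shows "grid t = {1} \<union> {gL t j |j. 1 \<le> j \<and> 3 * 2^(j-1) \<le> t - 1}
     \<union> {gR t j |j. 1 \<le> j \<and> 2^(j+1) \<le> t - 1}"
proof -
  have c1: "(1 \<le> j \<and> int j \<le> \<lfloor>log 2 ((real t - 1) / 3)\<rfloor> + 1) \<longleftrightarrow> (1 \<le> j \<and> 3 * 2^(j-1) \<le> t - 1)" for j
  proof (cases "1 \<le> j")
    case True
    have "int j \<le> \<lfloor>log 2 ((real t - 1) / 3)\<rfloor> + 1 \<longleftrightarrow> int (j-1) \<le> \<lfloor>log 2 ((real t - 1) / 3)\<rfloor>"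
      using True by auto
    also have "\<dots> \<longleftrightarrow> 2^(j-1) \<le> (real t - 1) / 3" using assms by (intro floor_log_le_iff) auto
    also have "\<dots> \<longleftrightarrow> real (3 * 2^(j-1)) \<le> real (t - 1)" using assms by (auto simp: of_nat_diff)
    also have "\<dots> \<longleftrightarrow> 3 * 2^(j-1) \<le> t - 1" by linarith
    finally show ?thesis using True by simp
  qed simp
  have c2: "(1 \<le> j \<and> int j \<le> \<lfloor>log 2 (real t - 1)\<rfloor> - 1) \<longleftrightarrow> (1 \<le> j \<and> 2^(j+1) \<le> t - 1)" for j
  proof -
    have "int j \<le> \<lfloor>log 2 (real t - 1)\<rfloor> - 1 \<longleftrightarrow> int (j+1) \<le> \<lfloor>log 2 (real t - 1)\<rfloor>" by auto
    also have "\<dots> \<longleftrightarrow> 2^(j+1) \<le> real t - 1" using assms by (intro floor_log_le_iff) auto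
    also have "\<dots> \<longleftrightarrow> real (2^(j+1)) \<le> real (t - 1)" using assms by (auto simp: of_nat_diff)
    also have "\<dots> \<longleftrightarrow> 2^(j+1) \<le> t - 1" by linarith
    finally show ?thesis by simp
  qed
  show ?thesis unfolding grid_def using c1 c2 by simp
qed

lemma grid_sub:
  assumes "2 \<le> t" shows "grid t \<subseteq> {1..t-1}"
proof
  fix g assume "g \<in> grid t"
  then consider "g = 1" | j where "1 \<le> j" "3 * 2^(j-1) \<le> t - 1" "g = gL t j"
    | j where "1 \<le> j" "2^(j+1) \<le> t - 1" "g = gR t j"
    unfolding grid_eq[OF assms] by blast
  then show "g \<in> {1..t-1}"
  proof cases
    case 1 then show ?thesis using assms by auto
  next
    case 2
    obtain i where i: "j = Suc i" using 2 by (cases j) auto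
    have m: "(t - 1) mod 2^i < 2^i" by simp
    have "2^j = 2 * (2::nat)^i" using i by simp
    then have "g = 2 * 2^i + (t - 1) mod 2^i" using 2 i unfolding gL_def by simp
    moreover have "3 * 2^i \<le> t - 1" using 2 i by simp
    moreover have "(1::nat) \<le> 2^i" by simp
    ultimately show ?thesis using m by (simp only: atLeastAtMost_iff) linarith
  next
    case 3
    obtain i where i: "j = Suc i" using 3 by (cases j) auto
    have m: "(t - 1) mod 2^i < 2^i" by simp
    have "2^j = 2 * (2::nat)^i" "2^(j+1) = 4 * (2::nat)^i" using i by simp_all
    then have "g = 3 * 2^i + (t - 1) mod 2^i" using 3 i unfolding gR_def gL_def by simp
    moreover have "(1::nat) \<le> 2^i" by simp
    ultimately show ?thesis using 3 m i \<open>2^(j+1) = 4 * (2::nat)^i\<close> by (simp only: atLeastAtMost_iff) linarith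
  qed
qed

lemma finite_grid: "2 \<le> t \<Longrightarrow> finite (grid t)"
  using grid_sub finite_subset by blast

lemma card_le_Max:
  fixes S :: "nat set"
  assumes "finite S" "\<forall>j\<in>S. 1 \<le> j" "S \<noteq> {}"
  shows "card S \<le> Max S"
proof -
  have "S \<subseteq> {1..Max S}" using assms by auto
  then have "card S \<le> card {1..Max S}" by (intro card_mono) auto
  then show ?thesis by simp
qed

lemma grid_cover:
  assumes "1 \<le> d" "2 * d \<le> t"
  shows "\<exists>g\<in>grid t. real d / 2 \<le> real g \<and> g \<le> d"
proof (cases "d = 1")
  case True
  then show ?thesis unfolding grid_def by auto
next
  case False
  have t2: "2 \<le> t" using assms by auto
  obtain j where j: "2^j \<le> d" "d < 2^(j+1)" using ex_power_ivl1[of 2 d] assms by auto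
  have j1: "1 \<le> j" using j False assms by (cases j) auto
  then obtain i where i: "j = Suc i" by (cases j) auto
  have m: "(t - 1) mod 2^i < 2^i" by simp
  have pj: "2^j = 2 * (2::nat)^i" "2^(j+1) = 4 * (2::nat)^i" using i by simp_all
  have pos: "(1::nat) \<le> 2^i" by simp
  show ?thesis
  proof (cases "gL t j \<le> d")
    case True
    have mem: "gL t j \<in> grid t" unfolding grid_eq[OF t2]
      using j1 i pj j assms pos by auto
    have "real d / 2 \<le> real (gL t j)"
    proof -
      have "d \<le> 2 * gL t j" using j pj unfolding gL_def by auto
      then show ?thesis by linarith
    qed
    then show ?thesis using mem True by auto
  next
    case False
    have gl: "gL t j < 3 * 2^i" using m pj unfolding gL_def i by auto
    have i1: "1 \<le> i"
    proof (rule ccontr)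
      assume "\<not> 1 \<le> i"
      then have "i = 0" by simp
      then show False using False j unfolding gL_def i by auto
    qed
    then obtain k where k: "i = Suc k" by (cases i) auto
    have m2: "(t - 1) mod 2^k < 2^k" by simp
    have pk: "(2::nat)^i = 2 * 2^k" using k by simp
    have gr: "gR t i = 2^i + (t - 1) mod 2^k + 2^k" unfolding gR_def gL_def k by simp
    have mem: "gR t i \<in> grid t" unfolding grid_eq[OF t2]
      using i1 pj j assms pos by (auto simp: i)
    have "d \<le> 2 * gR t i" using gr False gl pk by auto
    then have "real d / 2 \<le> real (gR t i)" by linarith
    moreover have "gR t i \<le> d" using gr m2 pk pj j by linarith
    ultimately show ?thesis using mem by auto
  qed
qed

lemma pow_bound:
  fixes a b t :: nat
  assumes t: "2 \<le> t"
    and A: "1 \<le> a \<Longrightarrow> 3 * 2^(a-1) \<le> t - 1"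
    and B: "1 \<le> b \<Longrightarrow> 2^(b+1) \<le> t - 1"
  shows "2^(1+a+b) \<le> t^2"
proof (cases "a = 0")
  case True
  show ?thesis
  proof (cases "b = 0")
    case True
    have "2 * 1 \<le> t * t" using t by (intro mult_le_mono) auto
    then show ?thesis using \<open>a=0\<close> True by (simp add: power2_eq_square)
  next
    case False
    then have "2^(b+1) \<le> t" using B by auto
    also have "t \<le> t^2" by (simp add: power2_eq_square)
    finally show ?thesis using True by simp
  qed
next
  case False
  then obtain a' where a': "a = Suc a'" by (cases a) auto
  have Aa: "3 * 2^a' \<le> t - 1" using A a' by simp
  show ?thesis
  proof (cases "b = 0")
    case True
    have "2^(1+a+b) = 4 * (2::nat)^a'" using True a' by simp
    also have "\<dots> \<le> 4 * (t - 1)" using Aa by simp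
    also have "\<dots> \<le> t^2"
    proof -
      have "4 * (t - 1) + (t - 2)^2 = t^2" using t
        by (cases t; cases "t - 1") (auto simp: power2_eq_square algebra_simps)
      then show ?thesis by linarith
    qed
    finally show ?thesis .
  next
    case False
    then obtain b' where b': "b = Suc b'" by (cases b) auto
    have Bb: "4 * 2^b' \<le> t - 1" using B b' by simp
    have "2^(1+a+b) = 8 * 2^a' * (2::nat)^b'" using a' b' by (simp add: power_add)
    also have "\<dots> \<le> (3 * 2^a') * (4 * 2^b')" by simp
    also have "\<dots> \<le> (t - 1) * (t - 1)" using Aa Bb by (intro mult_le_mono) auto
    also have "\<dots> \<le> t^2" unfolding power2_eq_square by (intro mult_le_mono) auto
    finally show ?thesis .
  qed
qed

lemma card_grid:
  assumes t: "2 \<le> t"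
  shows "real (card (grid t)) \<le> 3 * ln (real t)"
proof -
  define J1 where "J1 = {j. 1 \<le> j \<and> 3 * 2^(j-1) \<le> t - 1}"
  define J2 where "J2 = {j. 1 \<le> j \<and> 2^(j+1) \<le> t - (1::nat)}"
  have g: "grid t = {1} \<union> gL t ` J1 \<union> gR t ` J2"
    unfolding grid_eq[OF t] J1_def J2_def by auto
  have f1: "finite J1"
  proof (rule finite_subset[of _ "{..t}"])
    show "J1 \<subseteq> {..t}"
    proof
      fix j assume "j \<in> J1"
      then have "3 * 2^(j-1) \<le> t - 1" "1 \<le> j" unfolding J1_def by auto
      moreover have "j \<le> 2^(j-1) + 1"
        using less_exp[of "j-1"] by linarith
      ultimately show "j \<in> {..t}" using t by auto
    qed
  qed simp
  have f2: "finite J2"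
  proof (rule finite_subset[of _ "{..t}"])
    show "J2 \<subseteq> {..t}"
    proof
      fix j assume "j \<in> J2"
      then have "2^(j+1) \<le> t - 1" unfolding J2_def by auto
      moreover have "j < 2^(j+1)"
      proof -
        have "j < 2^j" by (rule less_exp)
        also have "(2::nat)^j \<le> 2^(j+1)" by simp
        finally show ?thesis .
      qed
      ultimately show "j \<in> {..t}" by auto
    qed
  qed simp
  define a where "a = card J1"
  define b where "b = card J2"
  have A: "3 * 2^(a-1) \<le> t - 1" if "1 \<le> a"
  proof -
    have ne: "J1 \<noteq> {}" using that a_def by auto
    have "a \<le> Max J1" unfolding a_def using f1 ne by (intro card_le_Max) (auto simp: J1_def)
    moreover have "Max J1 \<in> J1" using f1 ne by simp
    ultimately have "3 * 2^(a-1) \<le> 3 * (2::nat)^(Max J1 - 1)" by simp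
    also have "\<dots> \<le> t - 1" using \<open>Max J1 \<in> J1\<close> unfolding J1_def by simp
    finally show ?thesis .
  qed
  have B: "2^(b+1) \<le> t - 1" if "1 \<le> b"
  proof -
    have ne: "J2 \<noteq> {}" using that b_def by auto
    have "b \<le> Max J2" unfolding b_def using f2 ne by (intro card_le_Max) (auto simp: J2_def)
    moreover have "Max J2 \<in> J2" using f2 ne by simp
    ultimately have "(2::nat)^(b+1) \<le> 2^(Max J2 + 1)" by simp
    also have "\<dots> \<le> t - 1" using \<open>Max J2 \<in> J2\<close> unfolding J2_def by simp
    finally show ?thesis .
  qed
  have pw: "2^(1+a+b) \<le> t^2" using pow_bound[OF t A B] by blast
  have "card (grid t) \<le> card ({1} \<union> gL t ` J1) + card (gR t ` J2)"
    unfolding g by (rule card_Un_le)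
  also have "\<dots> \<le> 1 + card (gL t ` J1) + card (gR t ` J2)"
    using card_Un_le[of "{1}" "gL t ` J1"] by simp
  also have "\<dots> \<le> 1 + a + b" unfolding a_def b_def using card_image_le[OF f1] card_image_le[OF f2]
    by (meson add_le_mono le_refl)
  finally have c: "real (card (grid t)) \<le> real (1 + a + b)" by linarith
  have tp: "0 < real t" using t by simp
  have "real (1 + a + b) \<le> log 2 ((real t)^2)"
  proof -
    have "(2::real) powr real (1 + a + b) = real (2^(1+a+b))"
      by (subst powr_realpow) auto
    also have "\<dots> \<le> (real t)^2" using pw by (metis of_nat_le_iff of_nat_power)
    finally show ?thesis using tp by (subst le_log_iff) auto
  qed
  also have "\<dots> = 2 * ln (real t) / ln 2" using tp by (simp add: log_def ln_realpow)
  also have "\<dots> \<le> 3 * ln (real t)"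
  proof -
    have l: "0 \<le> ln (real t)" using t by simp
    have "3 * ln (real t) * (2/3) \<le> 3 * ln (real t) * ln 2"
      by (rule mult_left_mono[OF ln2_ge_two_thirds]) (use l in simp)
    then have "2 * ln (real t) \<le> 3 * ln (real t) * ln 2" by simp
    then show ?thesis by (simp add: divide_le_eq)
  qed
  finally show ?thesis using c by linarith
qed

theorem proposition3:
  fixes P1 P2 :: "(real ^ 'p) measure"
    and T :: "nat \<Rightarrow> nat \<Rightarrow> (nat \<Rightarrow> real ^ 'p) \<Rightarrow> bool"
    and \<delta> \<rho> :: real
    and r :: "nat \<Rightarrow> real \<Rightarrow> real"
  assumes P1: "prob_space P1" "sets P1 = sets borel"
    and P2: "prob_space P2" "sets P2 = sets borel"
    and \<delta>: "0 < \<delta>" "\<delta> < 1"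
    and meas: "\<And>t g. 2 \<le> t \<Longrightarrow> g \<in> {1..t-1} \<Longrightarrow>
        T t g \<in> measurable (\<Pi>\<^sub>M i\<in>UNIV. (borel :: (real ^ 'p) measure)) (count_space UNIV)"
    and dep: "\<And>t g \<omega> \<omega>'. 2 \<le> t \<Longrightarrow> g \<in> {1..t-1} \<Longrightarrow> (\<forall>i\<in>{1..t}. \<omega> i = \<omega>' i) \<Longrightarrow>
        T t g \<omega> = T t g \<omega>'"
    and A: "\<And>t g. 2 \<le> t \<Longrightarrow> g \<in> {1..t-1} \<Longrightarrow>
        measure (Ptau P1 P2 \<infinity>) {\<omega> \<in> space (Ptau P1 P2 \<infinity>). T t g \<omega>}
          \<le> \<delta> / (3 * real t ^ 2 * ln (real t))"
    and \<rho>: "0 \<le> \<rho>"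
    and rpos: "\<And>t. 0 < r t \<delta>"
    and rmono: "mono (\<lambda>t. r t \<delta>)"
    and B: "\<And>\<tau> t g. \<tau> < t \<Longrightarrow> t \<le> 2 * \<tau> \<Longrightarrow> r t \<delta> \<le> real (t - \<tau>) * \<rho> \<Longrightarrow>
        real (t - \<tau>) / 2 \<le> real g \<Longrightarrow> g \<le> t - \<tau> \<Longrightarrow>
        1 - \<delta> \<le> measure (Ptau P1 P2 (enat \<tau>)) {\<omega> \<in> space (Ptau P1 P2 (enat \<tau>)). T t g \<omega>}"
  shows "measure (Ptau P1 P2 \<infinity>) {\<omega> \<in> space (Ptau P1 P2 \<infinity>). tauhat T \<omega> < \<infinity>} \<le> \<delta>
    \<and> (\<forall>\<tau>::nat. r (2 * \<tau>) \<delta> \<le> real \<tau> * \<rho> \<longrightarrow>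
        1 - \<delta> \<le> measure (Ptau P1 P2 (enat \<tau>))
          {\<omega> \<in> space (Ptau P1 P2 (enat \<tau>)).
             tauhat T \<omega> \<le> enat (\<tau> + nat \<lceil>r (2 * \<tau>) \<delta> / \<rho>\<rceil>)})"
proof -
  define M where "M = (\<lambda>\<tau>. Ptau P1 P2 \<tau>)"
  have ps: "prob_space (M \<tau>)" for \<tau>
    unfolding M_def Ptau_def using P1 P2 by (intro prob_space_PiM) auto
  have sets_eq: "sets (M \<tau>) = sets (PiM UNIV (\<lambda>_. borel::(real^'p) measure))" for \<tau>
    unfolding M_def Ptau_def by (rule sets_PiM_cong) (auto simp: P1 P2)
  have evT: "{\<omega>\<in>space (M \<tau>). T t g \<omega>} \<in> sets (M \<tau>)" if "2 \<le> t" "g \<in> grid t" for t g \<tau>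
  proof -
    have "g \<in> {1..t-1}" using grid_sub[OF that(1)] that(2) by auto
    then have "T t g \<in> measurable (M \<tau>) (count_space UNIV)"
      using meas[OF that(1)] measurable_cong_sets[OF sets_eq refl] by auto
    then show ?thesis by (rule predE)
  qed
  define E where "E \<tau> t = {\<omega>\<in>space (M \<tau>). 2 \<le> t \<and> (\<exists>g\<in>grid t. T t g \<omega>)}" for \<tau> t
  have E_eq: "E \<tau> t = (\<Union>g\<in>grid t. {\<omega>\<in>space (M \<tau>). T t g \<omega>})" if "2 \<le> t" for \<tau> t
    unfolding E_def using that by auto
  have E_sets: "E \<tau> t \<in> sets (M \<tau>)" for \<tau> t
  proof (cases "2 \<le> t")
    case True
    then show ?thesis unfolding E_eq[OF True] using finite_grid[OF True] evT[OF True]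
      by (intro sets.finite_UN) auto
  next
    case False
    then show ?thesis unfolding E_def by simp
  qed
  have part1: "measure (M \<infinity>) {\<omega> \<in> space (M \<infinity>). tauhat T \<omega> < \<infinity>} \<le> \<delta>"
  proof -
    interpret P: prob_space "M \<infinity>" by (rule ps)
    have eq: "{\<omega> \<in> space (M \<infinity>). tauhat T \<omega> < \<infinity>} = (\<Union>t. E \<infinity> t)"
      unfolding tauhat_def E_def by auto
    define a where "a t = measure (M \<infinity>) (E \<infinity> t)" for t
    define c where "c t = (if 2 \<le> t then \<delta> / (real t - 1) - \<delta> / real t else 0)" for t
    have a_le: "a t \<le> c t" for t
    proof (cases "2 \<le> t")
      case False
      then show ?thesis unfolding a_def c_def E_def by simp
    next
      case True
      have tr: "2 \<le> real t" using True by simp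
      have lnp: "0 < ln (real t)" using tr by simp
      have "a t \<le> (\<Sum>g\<in>grid t. measure (M \<infinity>) {\<omega>\<in>space (M \<infinity>). T t g \<omega>})"
        unfolding a_def E_eq[OF True]
        by (rule measure_UNION_le) (use finite_grid[OF True] evT[OF True] in auto)
      also have "\<dots> \<le> (\<Sum>g\<in>grid t. \<delta> / (3 * real t ^ 2 * ln (real t)))"
        using grid_sub[OF True] A[OF True] unfolding M_def by (intro sum_mono) auto
      also have "\<dots> = real (card (grid t)) * (\<delta> / (3 * real t ^ 2 * ln (real t)))" by simp
      also have "\<dots> \<le> (3 * ln (real t)) * (\<delta> / (3 * real t ^ 2 * ln (real t)))"
        using card_grid[OF True] \<delta> lnp by (intro mult_right_mono) auto
      also have "\<dots> = \<delta> / (real t ^ 2)" using lnp by (simp add: field_simps)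
      also have "\<dots> \<le> \<delta> / (real t - 1) - \<delta> / real t"
      proof -
        have "\<delta> / (real t - 1) - \<delta> / real t = \<delta> / ((real t - 1) * real t)"
          using tr by (simp add: field_simps)
        also have "\<delta> / (real t ^ 2) \<le> \<delta> / ((real t - 1) * real t)"
          using tr \<delta> by (intro divide_left_mono) (auto simp: power2_eq_square)
        finally show ?thesis by simp
      qed
      finally show ?thesis unfolding c_def using True by simp
    qed
    have csum: "(\<Sum>t<n. c t) = (if n \<le> 2 then 0 else \<delta> - \<delta> / (real n - 1))" for n
    proof (induction n)
      case 0 then show ?case by (simp add: c_def)
    next
      case (Suc n)
      show ?case
      proof (cases "n \<le> 1")
        case True
        then have "n = 0 \<or> n = 1" by auto
        then show ?thesis by (auto simp: c_def lessThan_Suc)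
      next
        case False
        then have "2 \<le> n" by simp
        then show ?thesis using Suc by (auto simp: c_def)
      qed
    qed
    have csum_le: "(\<Sum>t<n. c t) \<le> \<delta>" for n
      using \<delta> by (auto simp: csum)
    have a_nn: "0 \<le> a t" for t unfolding a_def by simp
    have asum: "(\<Sum>t<n. a t) \<le> \<delta>" for n
    proof -
      have "(\<Sum>t<n. a t) \<le> (\<Sum>t<n. c t)" by (rule sum_mono) (rule a_le)
      then show ?thesis using csum_le[of n] by linarith
    qed
    have summ: "summable a" by (rule summableI_nonneg_bounded[OF a_nn asum])
    have "measure (M \<infinity>) (\<Union>t. E \<infinity> t) \<le> (\<Sum>t. a t)"
      unfolding a_def using E_sets summ[unfolded a_def]
      by (intro P.finite_measure_subadditive_countably) auto
    also have "\<dots> \<le> \<delta>" by (rule suminf_le_const[OF summ asum])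
    finally show ?thesis unfolding eq .
  qed
  have part2: "1 - \<delta> \<le> measure (M (enat \<tau>))
          {\<omega> \<in> space (M (enat \<tau>)). tauhat T \<omega> \<le> enat (\<tau> + nat \<lceil>r (2 * \<tau>) \<delta> / \<rho>\<rceil>)}"
    if h: "r (2 * \<tau>) \<delta> \<le> real \<tau> * \<rho>" for \<tau>
  proof -
    interpret P: prob_space "M (enat \<tau>)" by (rule ps)
    have r0: "0 < r (2 * \<tau>) \<delta>" by (rule rpos)
    have rho0: "0 < \<rho>" using r0 h \<rho> by (cases "\<rho> = 0") auto
    have tau0: "0 < \<tau>" using r0 h by (cases "\<tau> = 0") auto
    define x where "x = r (2 * \<tau>) \<delta> / \<rho>"
    have x0: "0 < x" unfolding x_def using r0 rho0 by simp
    have xt: "x \<le> real \<tau>" unfolding x_def using h rho0 by (simp add: divide_le_eq)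
    define d where "d = nat \<lceil>x\<rceil>"
    have d1: "1 \<le> d" unfolding d_def using x0 by linarith
    have dt: "d \<le> \<tau>" unfolding d_def
    proof -
      have "\<lceil>x\<rceil> \<le> int \<tau>" using xt by (simp add: ceiling_le_iff)
      then show "nat \<lceil>x\<rceil> \<le> \<tau>" by linarith
    qed
    have dx: "x \<le> real d" unfolding d_def using x0 by linarith
    define t where "t = \<tau> + d"
    have t2: "2 \<le> t" unfolding t_def using d1 tau0 by simp
    obtain g where g: "g \<in> grid t" "real d / 2 \<le> real g" "g \<le> d"
      using grid_cover[OF d1, of t] dt unfolding t_def by auto
    have rt: "r t \<delta> \<le> real (t - \<tau>) * \<rho>"
    proof -
      have "r t \<delta> \<le> r (2 * \<tau>) \<delta>" using rmono dt unfolding t_def mono_def by auto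
      also have "\<dots> = x * \<rho>" unfolding x_def using rho0 by simp
      also have "\<dots> \<le> real d * \<rho>" using dx rho0 by (intro mult_right_mono) auto
      finally show ?thesis unfolding t_def by simp
    qed
    have Bt: "1 - \<delta> \<le> measure (M (enat \<tau>)) {\<omega>\<in>space (M (enat \<tau>)). T t g \<omega>}"
    proof -
      have td: "t - \<tau> = d" unfolding t_def by simp
      show ?thesis unfolding M_def
      proof (rule B)
        show "\<tau> < t" using d1 unfolding t_def by simp
        show "t \<le> 2 * \<tau>" using dt unfolding t_def by simp
        show "r t \<delta> \<le> real (t - \<tau>) * \<rho>" by (rule rt)
        show "real (t - \<tau>) / 2 \<le> real g" unfolding td by (rule g(2))
        show "g \<le> t - \<tau>" unfolding td by (rule g(3))
      qed
    qed
    have sub: "{\<omega>\<in>space (M (enat \<tau>)). T t g \<omega>}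
        \<subseteq> {\<omega> \<in> space (M (enat \<tau>)). tauhat T \<omega> \<le> enat t}"
    proof safe
      fix \<omega> assume "T t g \<omega>"
      then have ex: "\<exists>s\<ge>2. \<exists>g\<in>grid s. T s g \<omega>" using t2 g by blast
      have "(LEAST s. 2 \<le> s \<and> (\<exists>g\<in>grid s. T s g \<omega>)) \<le> t"
        by (rule Least_le) (use t2 g \<open>T t g \<omega>\<close> in blast)
      then show "tauhat T \<omega> \<le> enat t" unfolding tauhat_def using ex by simp
    qed
    have seteq: "{\<omega> \<in> space (M (enat \<tau>)). tauhat T \<omega> \<le> enat t} = (\<Union>s\<in>{..t}. E (enat \<tau>) s)"
    proof (intro equalityI subsetI)
      fix \<omega> assume "\<omega> \<in> {\<omega> \<in> space (M (enat \<tau>)). tauhat T \<omega> \<le> enat t}"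
      then have w: "\<omega> \<in> space (M (enat \<tau>))" "tauhat T \<omega> \<le> enat t" by auto
      then have ex: "\<exists>s\<ge>2. \<exists>g\<in>grid s. T s g \<omega>" unfolding tauhat_def by (auto split: if_splits)
      define s where "s = (LEAST s. 2 \<le> s \<and> (\<exists>g\<in>grid s. T s g \<omega>))"
      have ex': "\<exists>s. 2 \<le> s \<and> (\<exists>g\<in>grid s. T s g \<omega>)" using ex by blast
      have s: "2 \<le> s \<and> (\<exists>g\<in>grid s. T s g \<omega>)" using LeastI_ex[OF ex'] unfolding s_def by blast
      have "s \<le> t" using w(2) ex unfolding tauhat_def s_def by simp
      then show "\<omega> \<in> (\<Union>s\<in>{..t}. E (enat \<tau>) s)" using s w(1) unfolding E_def by auto
    next
      fix \<omega> assume "\<omega> \<in> (\<Union>s\<in>{..t}. E (enat \<tau>) s)"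
      then obtain s where s: "s \<in> {..t}" "\<omega> \<in> E (enat \<tau>) s" by blast
      then have ex: "\<exists>s\<ge>2. \<exists>g\<in>grid s. T s g \<omega>" unfolding E_def by auto
      have "(LEAST s. 2 \<le> s \<and> (\<exists>g\<in>grid s. T s g \<omega>)) \<le> s"
        by (rule Least_le) (use s in \<open>auto simp: E_def\<close>)
      then have "tauhat T \<omega> \<le> enat t" unfolding tauhat_def using ex s(1) by simp
      moreover have "\<omega> \<in> space (M (enat \<tau>))" using s unfolding E_def by auto
      ultimately show "\<omega> \<in> {\<omega> \<in> space (M (enat \<tau>)). tauhat T \<omega> \<le> enat t}" by simp
    qed
    have sets2: "{\<omega> \<in> space (M (enat \<tau>)). tauhat T \<omega> \<le> enat t} \<in> sets (M (enat \<tau>))"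
      unfolding seteq using E_sets by (intro sets.finite_UN) auto
    have "1 - \<delta> \<le> measure (M (enat \<tau>)) {\<omega>\<in>space (M (enat \<tau>)). T t g \<omega>}" by (rule Bt)
    also have "\<dots> \<le> measure (M (enat \<tau>)) {\<omega> \<in> space (M (enat \<tau>)). tauhat T \<omega> \<le> enat t}"
      by (rule P.finite_measure_mono[OF sub sets2])
    finally show ?thesis unfolding t_def d_def x_def .
  qed
  show ?thesis using part1 part2 unfolding M_def by blast
qed

end
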